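(* Let $K$ be a field of characteristic not equal to $2$ and let $S$ be a (unital, not necessarily associative) $K$-algebra with a pseudo-degree function $\chi$. Let $a\in N(S)$ be such that $C_S(a)$ satisfies condition $D(\ell)$ for some $\ell>0$, and let $b\in C_S(a)\cap N_l(S)$. Then there exists a nonzero polynomial $P(s,t)\in K[s,t]$ such that $P(a,b)=0$, where for $P(s,t)=\sum_{i=0}^k f_i(s)t^i$ with $f_i\in K[s]$ one sets $P(a,b)=\sum_{i=0}^k f_i(a)b^i$.
   Context: All algebras are unital but not necessarily associative, and $K$ is embedded in $S$ via the unit. $N_l(S)$ is the set of $x\in S$ with $x(yz)=(xy)z$ for all $y,z\in S$ (so powers of an element of $N_l(S)$ are well defined). The nucleus $N(S)$ is the set of $x\in S$ with $x(yz)=(xy)z$, $(yx)z=y(xz)$ and $(yz)x=y(zx)$ for all $y,z\in S$. $C_S(a)$ denotes the set of elements of $S$ commuting with $a$. A pseudo-degree function on $S$ is a map $\chi:S\to\mathbb{Z}\cup\{-\infty\}$ such that $\chi(x)=-\infty$ iff $x=0$; $\chi(xy)=\chi(x)+\chi(y)$; and $\chi(x+y)\le\max(\chi(x),\chi(y))$ for all $x,y\in S$. For a positive integer $\ell$, a subalgebra $B\subseteq S$ satisfies condition $D(\ell)$ if $\chi(x)\ge0$ for all nonzero $x\in B$, and whenever $b_1,\dots,b_{\ell+1}\in B$ all have the same value under $\chi$, there exist $\alpha_1,\dots,\alpha_{\ell+1}\in K$, not all zero, with $\chi\left(\sum_{i=1}^{\ell+1}\alpha_ib_i\right)<\chi(b_1)$.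 *)

theory Defs
  imports Main "HOL-Library.Extended_Real" "HOL-Computational_Algebra.Polynomial"
begin

definition nonassoc_algebra ::
  "('k::field \<Rightarrow> 'a::ab_group_add \<Rightarrow> 'a) \<Rightarrow> ('a \<Rightarrow> 'a \<Rightarrow> 'a) \<Rightarrow> 'a \<Rightarrow> bool" where
  "nonassoc_algebra sm mul one \<longleftrightarrow>
     module sm \<and>
     (\<forall>x y z. mul (x + y) z = mul x z + mul y z) \<and>
     (\<forall>x y z. mul x (y + z) = mul x y + mul x z) \<and>
     (\<forall>c x y. mul (sm c x) y = sm c (mul x y)) \<and>
     (\<forall>c x y. mul x (sm c y) = sm c (mul x y)) \<and>
     (\<forall>x. mul one x = x \<and> mul x one = x)"

definition left_nucleus :: "('a \<Rightarrow> 'a \<Rightarrow> 'a) \<Rightarrow> 'a set" where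
  "left_nucleus mul = {x. \<forall>y z. mul x (mul y z) = mul (mul x y) z}"

definition nucleus :: "('a \<Rightarrow> 'a \<Rightarrow> 'a) \<Rightarrow> 'a set" where
  "nucleus mul = {x. \<forall>y z. mul x (mul y z) = mul (mul x y) z \<and>
                          mul (mul y x) z = mul y (mul x z) \<and>
                          mul (mul y z) x = mul y (mul z x)}"

definition centralizer :: "('a \<Rightarrow> 'a \<Rightarrow> 'a) \<Rightarrow> 'a \<Rightarrow> 'a set" where
  "centralizer mul a = {x. mul x a = mul a x}"

fun alg_pow :: "('a \<Rightarrow> 'a \<Rightarrow> 'a) \<Rightarrow> 'a \<Rightarrow> 'a \<Rightarrow> nat \<Rightarrow> 'a" where
  "alg_pow mul one x 0 = one"
| "alg_pow mul one x (Suc n) = mul x (alg_pow mul one x n)"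

definition pseudo_degree ::
  "('a::ab_group_add \<Rightarrow> 'a \<Rightarrow> 'a) \<Rightarrow> ('a \<Rightarrow> ereal) \<Rightarrow> bool" where
  "pseudo_degree mul \<chi> \<longleftrightarrow>
     (\<forall>x. \<chi> x \<in> insert (-\<infinity>) (range (\<lambda>n::int. ereal (real_of_int n)))) \<and>
     (\<forall>x. \<chi> x = -\<infinity> \<longleftrightarrow> x = 0) \<and>
     (\<forall>x y. \<chi> (mul x y) = \<chi> x + \<chi> y) \<and>
     (\<forall>x y. \<chi> (x + y) \<le> max (\<chi> x) (\<chi> y))"

definition cond_D ::
  "('k::field \<Rightarrow> 'a::ab_group_add \<Rightarrow> 'a) \<Rightarrow> ('a \<Rightarrow> ereal) \<Rightarrow> nat \<Rightarrow> 'a set \<Rightarrow> bool" where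
  "cond_D sm \<chi> l B \<longleftrightarrow>
     (\<forall>x\<in>B. x \<noteq> 0 \<longrightarrow> \<chi> x \<ge> 0) \<and>
     (\<forall>bs::nat \<Rightarrow> 'a. (\<forall>i\<le>l. bs i \<in> B \<and> bs i \<noteq> 0 \<and> \<chi> (bs i) = \<chi> (bs 0)) \<longrightarrow>
        (\<exists>\<alpha>::nat \<Rightarrow> 'k. (\<exists>i\<le>l. \<alpha> i \<noteq> 0) \<and>
            \<chi> (\<Sum>i\<le>l. sm (\<alpha> i) (bs i)) < \<chi> (bs 0)))"

definition poly_eval1 ::
  "('k::field \<Rightarrow> 'a::ab_group_add \<Rightarrow> 'a) \<Rightarrow> ('a \<Rightarrow> 'a \<Rightarrow> 'a) \<Rightarrow> 'a \<Rightarrow> 'k poly \<Rightarrow> 'a \<Rightarrow> 'a" where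
  "poly_eval1 sm mul one f a = (\<Sum>j\<le>degree f. sm (coeff f j) (alg_pow mul one a j))"

text \<open>P(s,t) = sum_i f_i(s) t^i is represented as a 'k poly poly (outer variable t);
  P(a,b) = sum_i f_i(a) b^i.\<close>
definition poly_eval2 ::
  "('k::field \<Rightarrow> 'a::ab_group_add \<Rightarrow> 'a) \<Rightarrow> ('a \<Rightarrow> 'a \<Rightarrow> 'a) \<Rightarrow> 'a \<Rightarrow> 'k poly poly \<Rightarrow> 'a \<Rightarrow> 'a \<Rightarrow> 'a" where
  "poly_eval2 sm mul one P a b =
     (\<Sum>i\<le>degree P. mul (poly_eval1 sm mul one (coeff P i) a) (alg_pow mul one b i))"

end

theory Submission
  imports Defs
begin

lemma (in vector_space) dimbound:
  fixes chi :: "'b \<Rightarrow> ereal" and B :: "'b set" and l :: nat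
  assumes sub: "subspace B"
  and fin: "\<And>x. x \<noteq> 0 \<Longrightarrow> \<exists>m::int. chi x = ereal (real_of_int m)"
  and zero: "chi 0 = -\<infinity>"
  and nonneg: "\<And>x. x\<in>B \<Longrightarrow> x\<noteq>0 \<Longrightarrow> chi x \<ge> 0"
  and D: "\<forall>bs::nat \<Rightarrow> 'b. (\<forall>i\<le>l. bs i \<in> B \<and> bs i \<noteq> 0 \<and> chi (bs i) = chi (bs 0)) \<longrightarrow>
        (\<exists>\<alpha>::nat \<Rightarrow> 'a. (\<exists>i\<le>l. \<alpha> i \<noteq> 0) \<and>
            chi (\<Sum>i\<le>l. scale (\<alpha> i) (bs i)) < chi (bs 0))"
  shows "finite A \<Longrightarrow> A \<subseteq> B \<Longrightarrow> independent A \<Longrightarrow> (\<forall>x\<in>A. chi x < ereal (real n)) \<Longrightarrow> card A \<le> l*n"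
proof (induction n arbitrary: A)
  case 0
  have "A = {}"
  proof (rule ccontr)
    assume "A \<noteq> {}"
    then obtain x where x: "x \<in> A" by blast
    have "x \<noteq> 0" using x 0 dependent_zero by blast
    then have "chi x \<ge> 0" using nonneg x 0 by blast
    moreover have "chi x < 0" using 0(4) x by (simp add: zero_ereal_def)
    ultimately show False by simp
  qed
  then show ?case by simp
next
  case (Suc n)
  have topval: "chi x = ereal (real n)" if "chi x \<ge> ereal (real n)" "chi x < ereal (real (Suc n))" for x
  proof -
    have "x \<noteq> 0" using that zero by auto
    then obtain m :: int where m: "chi x = ereal (real_of_int m)" using fin by blast
    then have "m = int n" using that by auto
    then show ?thesis using m by simp
  qed
  have main: "\<And>A. finite A \<Longrightarrow> A \<subseteq> B \<Longrightarrow> independent A \<Longrightarrow> (\<forall>x\<in>A. chi x < ereal (real (Suc n)))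
     \<Longrightarrow> card {x\<in>A. chi x \<ge> ereal (real n)} = k \<Longrightarrow> card A \<le> l * Suc n" for k
  proof (induction k rule: less_induct)
    case (less k A)
    define T where "T = {x\<in>A. chi x \<ge> ereal (real n)}"
    define L where "L = {x\<in>A. chi x < ereal (real n)}"
    have AU: "A = T \<union> L" "T \<inter> L = {}" unfolding T_def L_def by auto
    have finT: "finite T" "finite L" using less.prems(1) AU by auto
    have cA: "card A = card T + card L" using AU finT card_Un_disjoint by metis
    have cL: "card L \<le> l * n"
    proof (rule Suc.IH)
      show "finite L" by (rule finT(2))
      show "L \<subseteq> B" using less.prems(2) L_def by auto
      have LA: "L \<subseteq> A" unfolding L_def by blast
      show "independent L" by (rule independent_mono[OF less.prems(3) LA])
      show "\<forall>x\<in>L. chi x < ereal (real n)" using L_def by blast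
    qed
    have kT: "card T = k" using less.prems(5) T_def by simp
    show ?case
    proof (cases "k \<le> l")
      case True
      then show ?thesis using cA cL kT by simp
    next
      case False
      obtain h where h: "bij_betw h {0..<k} T" using ex_bij_betw_nat_finite[OF finT(1)] kT by blast
      have hT: "h i \<in> T" if "i \<le> l" for i
      proof -
        have "i \<in> {0..<k}" using that False by simp
        then show ?thesis using h bij_betwE by blast
      qed
      have hval: "chi (h i) = ereal (real n)" if "i \<le> l" for i
        using hT[OF that] less.prems(4) topval unfolding T_def by auto
      have hnz: "h i \<noteq> 0" if "i \<le> l" for i using hval[OF that] zero by auto
      have hB: "h i \<in> B" if "i \<le> l" for i using hT[OF that] less.prems(2) T_def by auto
      obtain \<alpha> where al: "\<exists>i\<le>l. \<alpha> i \<noteq> 0" and aly: "chi (\<Sum>i\<le>l. scale (\<alpha> i) (h i)) < chi (h 0)"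
      proof -
        have "\<forall>i\<le>l. h i \<in> B \<and> h i \<noteq> 0 \<and> chi (h i) = chi (h 0)" using hval hnz hB by simp
        then show ?thesis using D that by blast
      qed
      define y where "y = (\<Sum>i\<le>l. scale (\<alpha> i) (h i))"
      obtain i0 where i0: "i0 \<le> l" "\<alpha> i0 \<noteq> 0" using al by blast
      define x0 where "x0 = h i0"
      have x0A: "x0 \<in> A" using hT[OF i0(1)] T_def x0_def by auto
      have x0T: "x0 \<in> T" using hT[OF i0(1)] x0_def by auto
      have ylow: "chi y < ereal (real n)" using aly hval[of 0] y_def by simp
      have yB: "y \<in> B" unfolding y_def
        by (rule subspace_sum[OF sub]) (use hB sub in \<open>auto simp: subspace_def\<close>)
      have hinj: "inj_on h {0..<k}" using h bij_betw_def by blast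
      have ynot: "y \<notin> span (A - {x0})"
      proof
        assume ys: "y \<in> span (A - {x0})"
        have ysplit: "y = scale (\<alpha> i0) x0 + (\<Sum>i\<in>{..l}-{i0}. scale (\<alpha> i) (h i))"
          unfolding y_def x0_def using i0(1) by (simp add: sum.remove)
        have rest: "(\<Sum>i\<in>{..l}-{i0}. scale (\<alpha> i) (h i)) \<in> span (A - {x0})"
        proof (rule span_sum)
          fix i assume i: "i \<in> {..l}-{i0}"
          have "h i \<noteq> h i0" using i i0 hinj False by (auto simp: inj_on_def)
          then have "h i \<in> A - {x0}" using hT[of i] i T_def x0_def by auto
          then show "scale (\<alpha> i) (h i) \<in> span (A - {x0})" by (intro span_scale span_base)
        qed
        have "scale (\<alpha> i0) x0 \<in> span (A - {x0})"
          using span_diff[OF ys rest] ysplit by (metis add_diff_cancel_right')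
        then have "scale (inverse (\<alpha> i0)) (scale (\<alpha> i0) x0) \<in> span (A - {x0})" by (rule span_scale)
        then have "x0 \<in> span (A - {x0})" using i0(2) by simp
        then have "dependent A" using x0A dependent_def by blast
        then show False using less.prems(3) by blast
      qed
      define A2 where "A2 = insert y (A - {x0})"
      have yA: "y \<notin> A - {x0}"
      proof
        assume "y \<in> A - {x0}"
        then have "y \<in> span (A - {x0})" by (rule span_base)
        with ynot show False by contradiction
      qed
      have cA2: "card A2 = card A"
      proof -
        have "card A2 = Suc (card (A - {x0}))" unfolding A2_def
          using yA less.prems(1) by (metis card_insert_disjoint finite_Diff)
        also have "\<dots> = card A" using less.prems(1) x0A by (rule card_Suc_Diff1)
        finally show ?thesis .
      qed
      have indA2: "independent A2" unfolding A2_def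
        using independent_insertI[OF ynot] independent_mono[OF less.prems(3)] by blast
      have A2B: "A2 \<subseteq> B" using A2_def yB less.prems(2) by auto
      have A2b: "\<forall>x\<in>A2. chi x < ereal (real (Suc n))" using A2_def ylow less.prems(4)
        by (auto intro: order.strict_trans)
      have yn: "\<not> ereal (real n) \<le> chi y" using ylow by (simp add: not_le)
      have topA2: "{x\<in>A2. chi x \<ge> ereal (real n)} = T - {x0}"
      proof (rule set_eqI)
        fix x
        show "x \<in> {x\<in>A2. chi x \<ge> ereal (real n)} \<longleftrightarrow> x \<in> T - {x0}"
        proof (cases "x = y")
          case True
          have "x \<notin> T" using True yA yn unfolding T_def by simp
          then show ?thesis using True yn by simp
        next
          case False
          then show ?thesis unfolding A2_def T_def by (simp add: conj_ac)
        qed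
      qed
      have ck: "card (T - {x0}) < k" using card_Diff1_less[OF finT(1) x0T] kT by simp
      have finA2: "finite A2" using A2_def less.prems(1) by simp
      have "card A2 \<le> l * Suc n"
        by (rule less.IH[OF ck finA2 A2B indA2 A2b arg_cong[where f=card, OF topA2]])
      then show ?thesis using cA2 by simp
    qed
  qed
  show ?case using main[OF Suc.prems refl] .
qed

lemma mul_sum_left:
  fixes mul :: "'a::ab_group_add \<Rightarrow> 'a \<Rightarrow> 'a"
  assumes "\<forall>x y z. mul (x + y) z = mul x z + mul y z"
  shows "mul (sum f A) z = (\<Sum>i\<in>A. mul (f i) z)"
proof -
  have z0: "mul 0 z = 0" for z
    using assms[rule_format, of 0 0 z] by simp
  show ?thesis
  proof (cases "finite A")
    case True
    then show ?thesis by (induction A rule: finite_induct) (auto simp: z0 assms)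
  qed (simp add: z0)
qed

lemma mul_sum_right:
  fixes mul :: "'a::ab_group_add \<Rightarrow> 'a \<Rightarrow> 'a"
  assumes "\<forall>x y z. mul x (y + z) = mul x y + mul x z"
  shows "mul z (sum f A) = (\<Sum>i\<in>A. mul z (f i))"
proof -
  have z0: "mul z 0 = 0" for z
    using assms[rule_format, of z 0 0] by simp
  show ?thesis
  proof (cases "finite A")
    case True
    then show ?thesis by (induction A rule: finite_induct) (auto simp: z0 assms)
  qed (simp add: z0)
qed

lemma poly_eval1_ext:
  assumes "degree f \<le> M" "\<forall>x. sm 0 x = 0"
  shows "poly_eval1 sm mul one f x = (\<Sum>j\<le>M. sm (coeff f j) (alg_pow mul one x j))"
  unfolding poly_eval1_def
  apply (rule sum.mono_neutral_left)
    apply (use assms in auto)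
  apply (metis assms(2) coeff_eq_0 not_le_imp_less)
  done

lemma poly_eval2_ext:
  assumes "degree P \<le> M" "\<forall>x. sm 0 x = 0" "\<forall>y. mul 0 y = 0"
  shows "poly_eval2 sm mul one P a b = (\<Sum>i\<le>M. mul (poly_eval1 sm mul one (coeff P i) a) (alg_pow mul one b i))"
  unfolding poly_eval2_def
  apply (rule sum.mono_neutral_left)
    apply (use assms in auto)
  apply (metis (no_types, lifting) assms coeff_eq_0 not_le_imp_less degree_0 le0 poly_eval1_def
      sum.neutral coeff_0)
  done

lemma poly_from_coeffs:
  fixes c :: "nat \<times> nat \<Rightarrow> 'k::field" and sm :: "'k \<Rightarrow> 'a::ab_group_add \<Rightarrow> 'a"
  assumes alg: "nonassoc_algebra sm mul one"
    and nz: "\<exists>p\<in>{..N}\<times>{..N}. c p \<noteq> 0"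
    and sum0: "(\<Sum>p\<in>{..N}\<times>{..N}. sm (c p) (mul (alg_pow mul one a (fst p)) (alg_pow mul one b (snd p)))) = 0"
  shows "\<exists>P::'k poly poly. P \<noteq> 0 \<and> poly_eval2 sm mul one P a b = 0"
proof -
  interpret V: vector_space sm using alg unfolding nonassoc_algebra_def module_iff_vector_space by blast
  have addL: "\<forall>x y z. mul (x + y) z = mul x z + mul y z"
    and smL: "\<forall>c x y. mul (sm c x) y = sm c (mul x y)"
    using alg unfolding nonassoc_algebra_def by auto
  have m0: "\<forall>y. mul 0 y = 0" using addL by (metis add_cancel_right_right)
  have s0: "\<forall>x. sm 0 x = 0" by simp
  define Q where "Q j = (\<Sum>i\<le>N. monom (c (i,j)) i)" for j
  define P where "P = (\<Sum>j\<le>N. monom (Q j) j)"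
  have cQ: "coeff (Q j) i = (if i \<le> N then c (i,j) else 0)" for i j
    unfolding Q_def by (simp add: coeff_sum coeff_monom)
  have cP: "coeff P j = (if j \<le> N then Q j else 0)" for j
    unfolding P_def by (simp add: coeff_sum coeff_monom)
  have dP: "degree P \<le> N" by (rule degree_le) (simp add: cP)
  have dQ: "degree (Q j) \<le> N" for j by (rule degree_le) (simp add: cQ)
  have "P \<noteq> 0"
  proof
    assume "P = 0"
    obtain p where p: "p \<in> {..N}\<times>{..N}" "c p \<noteq> 0" using nz by blast
    have "coeff (coeff P (snd p)) (fst p) = c p" using p(1) cP cQ by (cases p) auto
    then show False using p(2) \<open>P = 0\<close> by simp
  qed
  moreover have "poly_eval2 sm mul one P a b = 0"
  proof -
    have "poly_eval2 sm mul one P a b =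
        (\<Sum>j\<le>N. mul (\<Sum>i\<le>N. sm (c (i,j)) (alg_pow mul one a i)) (alg_pow mul one b j))"
      unfolding poly_eval2_ext[where P=P and M=N and sm=sm and mul=mul and one=one and a=a and b=b, OF dP s0 m0]
      by (intro sum.cong refl) (simp add: cP cQ poly_eval1_ext[where sm=sm and M=N and mul=mul and one=one, OF dQ s0])
    also have "\<dots> = (\<Sum>j\<le>N. \<Sum>i\<le>N. sm (c (i,j)) (mul (alg_pow mul one a i) (alg_pow mul one b j)))"
      by (simp add: mul_sum_left[OF addL] smL)
    also have "\<dots> = (\<Sum>i\<le>N. \<Sum>j\<le>N. sm (c (i,j)) (mul (alg_pow mul one a i) (alg_pow mul one b j)))"
      by (rule sum.swap)
    also have "\<dots> = 0" using sum0 by (simp add: sum.cartesian_product case_prod_beta)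
    finally show ?thesis .
  qed
  ultimately show ?thesis by blast
qed


theorem corollary2p9:
  fixes sm :: "'k::field \<Rightarrow> 'a::ab_group_add \<Rightarrow> 'a"
    and mul :: "'a \<Rightarrow> 'a \<Rightarrow> 'a" and one :: 'a
    and \<chi> :: "'a \<Rightarrow> ereal" and l :: nat and a b :: 'a
  assumes "(2::'k) \<noteq> 0"
    and "nonassoc_algebra sm mul one"
    and "pseudo_degree mul \<chi>"
    and "a \<in> nucleus mul"
    and "l > 0"
    and "cond_D sm \<chi> l (centralizer mul a)"
    and "b \<in> centralizer mul a \<inter> left_nucleus mul"
  shows "\<exists>P::'k poly poly. P \<noteq> 0 \<and> poly_eval2 sm mul one P a b = 0"
proof -
  note alg = assms(2)
  interpret V: vector_space sm using alg unfolding nonassoc_algebra_def module_iff_vector_space by blast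
  have addL: "\<forall>x y z. mul (x + y) z = mul x z + mul y z"
    and addR: "\<forall>x y z. mul x (y + z) = mul x y + mul x z"
    and smL: "\<forall>c x y. mul (sm c x) y = sm c (mul x y)"
    and smR: "\<forall>c x y. mul x (sm c y) = sm c (mul x y)"
    and unit: "\<forall>x. mul one x = x \<and> mul x one = x"
    using alg unfolding nonassoc_algebra_def by auto
  have m0L: "mul 0 y = 0" for y using addL by (metis add_cancel_right_right)
  have m0R: "mul y 0 = 0" for y using addR by (metis add_cancel_right_right)
  show ?thesis
  proof (cases "one = 0")
    case True
    have all0: "x = 0" for x :: 'a
    proof -
      have "x = mul one x" using unit by simp
      then show ?thesis using True m0L by simp
    qed
    show ?thesis by (rule exI[of _ 1]) (simp add: all0[of "poly_eval2 sm mul one 1 a b"])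
  next
    case False
    have pd1: "\<forall>x. \<chi> x \<in> insert (-\<infinity>) (range (\<lambda>n::int. ereal (real_of_int n)))"
      and pd2: "\<forall>x. \<chi> x = -\<infinity> \<longleftrightarrow> x = 0"
      and pd3: "\<forall>x y. \<chi> (mul x y) = \<chi> x + \<chi> y"
      using assms(3) unfolding pseudo_degree_def by auto
    have fin: "\<exists>m::int. \<chi> x = ereal (real_of_int m)" if "x \<noteq> 0" for x
      using pd1 pd2 that by blast
    have chi1: "\<chi> one = 0"
    proof -
      obtain m :: int where m: "\<chi> one = ereal (real_of_int m)" using fin False by blast
      have "\<chi> one = \<chi> one + \<chi> one" using pd3 unit by metis
      then have "m = 0" using m by simp
      then show ?thesis using m by (simp add: zero_ereal_def)
    qed
    define C where "C = centralizer mul a"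
    have nonneg: "\<And>x. x\<in>C \<Longrightarrow> x\<noteq>0 \<Longrightarrow> \<chi> x \<ge> 0"
      and D: "\<forall>bs::nat \<Rightarrow> 'a. (\<forall>i\<le>l. bs i \<in> C \<and> bs i \<noteq> 0 \<and> \<chi> (bs i) = \<chi> (bs 0)) \<longrightarrow>
        (\<exists>\<alpha>::nat \<Rightarrow> 'k. (\<exists>i\<le>l. \<alpha> i \<noteq> 0) \<and>
            \<chi> (\<Sum>i\<le>l. sm (\<alpha> i) (bs i)) < \<chi> (bs 0))"
    proof -
      have cd: "(\<forall>x\<in>C. x \<noteq> 0 \<longrightarrow> \<chi> x \<ge> 0) \<and> (\<forall>bs::nat \<Rightarrow> 'a. (\<forall>i\<le>l. bs i \<in> C \<and> bs i \<noteq> 0 \<and> \<chi> (bs i) = \<chi> (bs 0)) \<longrightarrow>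
        (\<exists>\<alpha>::nat \<Rightarrow> 'k. (\<exists>i\<le>l. \<alpha> i \<noteq> 0) \<and>
            \<chi> (\<Sum>i\<le>l. sm (\<alpha> i) (bs i)) < \<chi> (bs 0)))"
        using assms(6) unfolding cond_D_def C_def .
      then show "\<And>x. x\<in>C \<Longrightarrow> x\<noteq>0 \<Longrightarrow> \<chi> x \<ge> 0" by blast
      show "\<forall>bs::nat \<Rightarrow> 'a. (\<forall>i\<le>l. bs i \<in> C \<and> bs i \<noteq> 0 \<and> \<chi> (bs i) = \<chi> (bs 0)) \<longrightarrow>
        (\<exists>\<alpha>::nat \<Rightarrow> 'k. (\<exists>i\<le>l. \<alpha> i \<noteq> 0) \<and>
            \<chi> (\<Sum>i\<le>l. sm (\<alpha> i) (bs i)) < \<chi> (bs 0))" using cd by (rule conjunct2)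
    qed
    have subC: "V.subspace C"
      unfolding V.subspace_def C_def centralizer_def
      using m0L m0R addL addR smL smR by simp
    have n1: "\<And>y z. mul a (mul y z) = mul (mul a y) z"
      and n2: "\<And>y z. mul (mul y a) z = mul y (mul a z)"
      and n3: "\<And>y z. mul (mul y z) a = mul y (mul z a)"
      using assms(4) unfolding nucleus_def by auto
    have ba: "mul b a = mul a b" using assms(7) unfolding centralizer_def by auto
    have powa: "mul (alg_pow mul one a i) a = mul a (alg_pow mul one a i)" for i
    proof (induction i)
      case 0 then show ?case using unit by simp
    next
      case (Suc i) then show ?case using n3 by simp
    qed
    have powb: "mul (alg_pow mul one b j) a = mul a (alg_pow mul one b j)" for j
    proof (induction j)
      case 0 then show ?case using unit by simp
    next
      case (Suc j)
      have "mul (mul b (alg_pow mul one b j)) a = mul b (mul (alg_pow mul one b j) a)" by (rule n3)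
      also have "\<dots> = mul b (mul a (alg_pow mul one b j))" using Suc by simp
      also have "\<dots> = mul (mul b a) (alg_pow mul one b j)" using n2 by metis
      also have "\<dots> = mul a (mul b (alg_pow mul one b j))" using ba n1 by metis
      finally show ?case by simp
    qed
    define mono where "mono p = mul (alg_pow mul one a (fst p)) (alg_pow mul one b (snd p))" for p
    have monoC: "mono p \<in> C" for p
    proof -
      let ?P = "alg_pow mul one a (fst p)" and ?Q = "alg_pow mul one b (snd p)"
      have "mul (mul ?P ?Q) a = mul ?P (mul ?Q a)" by (rule n3)
      also have "\<dots> = mul ?P (mul a ?Q)" using powb by simp
      also have "\<dots> = mul (mul ?P a) ?Q" using n2 by metis
      also have "\<dots> = mul (mul a ?P) ?Q" using powa by simp
      also have "\<dots> = mul a (mul ?P ?Q)" using n1 by metis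
      finally show ?thesis unfolding mono_def C_def centralizer_def by simp
    qed
    have degbound: "\<exists>Dx::nat. \<chi> x \<le> ereal (real Dx)" if "x \<in> C" for x
    proof (cases "x = 0")
      case True
      then have "\<chi> x = -\<infinity>" using pd2 by simp
      then show ?thesis by simp
    next
      case False
      obtain m :: int where m: "\<chi> x = ereal (real_of_int m)" using fin False by blast
      have "m \<ge> 0" using nonneg[OF that False] m by (simp add: zero_ereal_def)
      then show ?thesis using m by (intro exI[of _ "nat m"]) simp
    qed
    have aC: "a \<in> C" unfolding C_def centralizer_def by simp
    have bC: "b \<in> C" using assms(7) C_def by simp
    obtain Da :: nat where Da: "\<chi> a \<le> ereal (real Da)" using degbound[OF aC] by blast
    obtain Db :: nat where Db: "\<chi> b \<le> ereal (real Db)" using degbound[OF bC] by blast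
    have powbound: "\<chi> (alg_pow mul one x i) \<le> ereal (real (i * Dx))" if "\<chi> x \<le> ereal (real Dx)" for x i Dx
    proof (induction i)
      case 0 then show ?case using chi1 by (simp add: zero_ereal_def)
    next
      case (Suc i)
      have "\<chi> (alg_pow mul one x (Suc i)) = \<chi> x + \<chi> (alg_pow mul one x i)" using pd3 by simp
      also have "\<dots> \<le> ereal (real Dx) + ereal (real (i * Dx))" using that Suc by (rule add_mono)
      also have "\<dots> = ereal (real (Suc i * Dx))" by simp
      finally show ?case .
    qed
    define d where "d = Da + Db"
    define N where "N = l * (d + 1)"
    define I where "I = {..N} \<times> {..N}"
    have monobound: "\<chi> (mono p) < ereal (real (N * d + 1))" if "p \<in> I" for p
    proof -
      have "\<chi> (mono p) = \<chi> (alg_pow mul one a (fst p)) + \<chi> (alg_pow mul one b (snd p))"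
        using pd3 mono_def by simp
      also have "\<dots> \<le> ereal (real (fst p * Da)) + ereal (real (snd p * Db))"
        using powbound[OF Da] powbound[OF Db] by (rule add_mono)
      also have "\<dots> = ereal (real (fst p * Da + snd p * Db))" by simp
      also have "\<dots> \<le> ereal (real (N * d))"
      proof -
        have "fst p * Da \<le> N * Da" "snd p * Db \<le> N * Db" using that I_def by auto
        then have "fst p * Da + snd p * Db \<le> N * Da + N * Db" by (rule add_mono)
        then have "fst p * Da + snd p * Db \<le> N * d" unfolding d_def by (simp add: add_mult_distrib2)
        then have "real (fst p * Da + snd p * Db) \<le> real (N * d)" by (rule of_nat_mono)
        then show ?thesis by (simp only: ereal_less_eq(3))
      qed
      also have "\<dots> < ereal (real (N * d + 1))" by simp
      finally show ?thesis .
    qed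
    have key: "\<exists>c. (\<exists>p\<in>I. c p \<noteq> 0) \<and> (\<Sum>p\<in>I. sm (c p) (mono p)) = 0"
    proof (cases "inj_on mono I")
      case False
      then obtain p q where pq: "p \<in> I" "q \<in> I" "p \<noteq> q" "mono p = mono q"
        unfolding inj_on_def by blast
      define c where "c r = (if r = p then 1 else 0) - (if r = q then 1 else (0::'k))" for r
      have "(\<Sum>r\<in>I. sm (c r) (mono r)) =
          (\<Sum>r\<in>I. (if p = r then mono p else 0)) - (\<Sum>r\<in>I. (if q = r then mono q else 0))"
        unfolding sum_subtractf[symmetric] c_def V.scale_left_diff_distrib
        by (intro sum.cong refl) auto
      also have "\<dots> = 0"
      proof -
        have fI: "finite I" unfolding I_def by simp
        show ?thesis using pq sum.delta'[OF fI, of p "\<lambda>_. mono p"] sum.delta'[OF fI, of q "\<lambda>_. mono q"] by simp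
      qed
      finally show ?thesis using pq by (intro exI[of _ c]) (auto simp: c_def)
    next
      case True
      have cardI: "card (mono ` I) = (N+1)*(N+1)"
        using card_image[OF True] unfolding I_def by (simp add: card_cartesian_product)
      have "V.dependent (mono ` I)"
      proof (rule ccontr)
        assume ind: "V.independent (mono ` I)"
        have "card (mono ` I) \<le> l * (N * d + 1)"
        proof (rule V.dimbound[OF subC _ _ nonneg D])
          show "\<And>x. x \<noteq> 0 \<Longrightarrow> \<exists>m::int. \<chi> x = ereal (real_of_int m)" by (rule fin)
          show "\<chi> 0 = -\<infinity>" using pd2 by simp
          show "finite (mono ` I)" unfolding I_def by simp
          show "mono ` I \<subseteq> C" using monoC by auto
          show "V.independent (mono ` I)" by (rule ind)
          show "\<forall>x\<in>mono ` I. \<chi> x < ereal (real (N * d + 1))" using monobound by auto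
        qed
        moreover have "l * (N * d + 1) < (N+1)*(N+1)"
        proof -
          have e1: "l * (N * d + 1) = N * (l * d) + l" by (simp add: algebra_simps)
          have e2: "(N+1)*(N+1) = N * N + 2 * N + 1" by (simp add: algebra_simps)
          have b1: "l * d \<le> N" unfolding N_def by (simp add: algebra_simps)
          have b2: "N * (l * d) \<le> N * N" using b1 by (rule mult_le_mono2)
          have b3: "l \<le> N" unfolding N_def by simp
          show ?thesis using e1 e2 b2 b3 by linarith
        qed
        ultimately show False using cardI by simp
      qed
      then obtain t u v where tu: "finite t" "t \<subseteq> mono ` I" "(\<Sum>v\<in>t. sm (u v) v) = 0" "v \<in> t" "u v \<noteq> 0"
        unfolding V.dependent_explicit by blast
      define c where "c p = (if mono p \<in> t then u (mono p) else 0)" for p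
      obtain p0 where p0: "p0 \<in> I" "mono p0 = v" using tu by blast
      have "(\<Sum>p\<in>I. sm (c p) (mono p)) = (\<Sum>p\<in>I. if mono p \<in> t then sm (u (mono p)) (mono p) else 0)"
        unfolding c_def by (intro sum.cong refl) auto
      also have "\<dots> = (\<Sum>p\<in>{p\<in>I. mono p \<in> t}. sm (u (mono p)) (mono p))"
        unfolding I_def by (rule sum.inter_filter[symmetric]) simp
      also have "\<dots> = (\<Sum>v\<in>mono ` {p\<in>I. mono p \<in> t}. sm (u v) v)"
        by (rule sum.reindex[symmetric, unfolded comp_def]) (use True in \<open>auto simp: inj_on_def\<close>)
      also have "mono ` {p\<in>I. mono p \<in> t} = t" using tu(2) by auto
      finally have "(\<Sum>p\<in>I. sm (c p) (mono p)) = 0" using tu(3) by simp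
      then show ?thesis using p0 tu by (intro exI[of _ c]) (auto simp: c_def)
    qed
    then obtain c where c: "\<exists>p\<in>{..N}\<times>{..N}. c p \<noteq> 0"
      "(\<Sum>p\<in>{..N}\<times>{..N}. sm (c p) (mul (alg_pow mul one a (fst p)) (alg_pow mul one b (snd p)))) = 0"
      unfolding I_def mono_def by blast
    show ?thesis by (rule poly_from_coeffs[OF alg c])
  qed
qed

end
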